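(* Assume the Bateman–Horn Conjecture. Then $\limsup_{n\to\infty} j(a_n)=\infty$; that is, for every positive integer $k$ there are infinitely many $n$ with $j(a_n)\ge k$.
   Context: Let $A$ be the set of positive integers $a$ such that $a^2+1$ is prime, enumerated in increasing order as $A=\{a_1<a_2<\cdots\}$. For $n\ge 2$, $j(a_n)$ denotes the smallest index $i$ with $1\le i\le n-1$ such that $a_n-a_{n-i}\in A$. A finite set of polynomials $f_1,\dots,f_k\in\mathbb{Z}[x]$ satisfies the Bunyakovsky condition if there is no prime $p$ such that $\prod_i f_i(a)\equiv 0 \pmod p$ for all $a\in\mathbb{F}_p$. The Bateman–Horn Conjecture: if $f_1,\dots,f_k\in\mathbb{Z}[x]$ are distinct irreducible polynomials with positive leading coefficients satisfying the Bunyakovsky condition, then the number of positive integers $m\le x$ for which $f_1(m),\dots,f_k(m)$ are all prime is asymptotic to $C\,\frac{x}{\log^k x}$ for some constant $C>0$ (depending on $f_1,\dots,f_k$). *)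

theory Defs
  imports "HOL-Computational_Algebra.Computational_Algebra" "HOL-Library.Landau_Symbols"
    "HOL-Library.Infinite_Set"
begin

definition setA :: "nat set" where
  "setA = {a. a > 0 \<and> prime (a^2 + 1)}"

text \<open>Enumeration a_1 < a_2 < ... of A (1-indexed).\<close>
definition aseq :: "nat \<Rightarrow> nat" where
  "aseq n = enumerate setA (n - 1)"

definition jfun :: "nat \<Rightarrow> nat option" where
  "jfun n = (if \<exists>i. 1 \<le> i \<and> i \<le> n - 1 \<and> aseq n - aseq (n - i) \<in> setA
             then Some (LEAST i. 1 \<le> i \<and> i \<le> n - 1 \<and> aseq n - aseq (n - i) \<in> setA)
             else None)"

definition bunyakovsky :: "int poly set \<Rightarrow> bool" where
  "bunyakovsky F \<longleftrightarrow> \<not> (\<exists>p::int. prime p \<and> (\<forall>a::int. p dvd (\<Prod>f\<in>F. poly f a)))"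

definition prime_count_family :: "int poly set \<Rightarrow> real \<Rightarrow> nat" where
  "prime_count_family F x = card {m::nat. 0 < m \<and> real m \<le> x \<and> (\<forall>f\<in>F. prime (poly f (int m)))}"

definition bateman_horn :: bool where
  "bateman_horn \<longleftrightarrow>
    (\<forall>F::int poly set. finite F \<and> F \<noteq> {} \<and> (\<forall>f\<in>F. irreducible f \<and> lead_coeff f > 0)
        \<and> bunyakovsky F \<longrightarrow>
      (\<exists>C>0. (\<lambda>x. real (prime_count_family F x)) \<sim>[at_top] (\<lambda>x. C * x / ln x ^ card F)))"

end

theory Submission
  imports Defs
begin



definition fp :: "nat \<Rightarrow> int poly" where
  "fp c = [:int c ^ 2 + 1, - 2 * int c, 1:]"

lemma poly_fp: "poly (fp c) a = (a - int c)^2 + 1"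
  by (simp add: fp_def algebra_simps power2_eq_square)

lemma fp_inj: "inj fp"
proof (rule injI)
  fix x y assume "fp x = fp y"
  then have "coeff (fp x) 1 = coeff (fp y) 1" by simp
  then show "x = y" by (simp add: fp_def)
qed

lemma degree_fp: "degree (fp c) = 2"
  by (simp add: fp_def)

lemma lead_fp: "lead_coeff (fp c) = 1"
  by (simp add: fp_def)

lemma irred_fp: "irreducible (fp c)"
proof (rule irreducibleI)
  show "fp c \<noteq> 0" using degree_fp[of c] by auto
  show "\<not> is_unit (fp c)"
  proof
    assume "is_unit (fp c)"
    then obtain u where "fp c = [:u:]" using is_unit_poly_iff by blast
    then show False using degree_fp[of c] by simp
  qed
  fix a b assume ab: "fp c = a * b"
  have a0: "a \<noteq> 0" and b0: "b \<noteq> 0" using ab \<open>fp c \<noteq> 0\<close> by auto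
  have deg: "degree a + degree b = 2" using ab a0 b0 degree_fp[of c] by (metis degree_mult_eq)
  have lc: "lead_coeff a * lead_coeff b = 1" using ab lead_fp[of c] by (metis lead_coeff_mult)
  have ua: "is_unit (lead_coeff a)" and ub: "is_unit (lead_coeff b)"
    using lc by (metis dvd_triv_left dvd_triv_right)+
  consider "degree a = 0" | "degree a = 1" | "degree b = 0" using deg by linarith
  then show "is_unit a \<or> is_unit b"
  proof cases
    case 1
    then have "a = [:lead_coeff a:]" by (metis degree_0_id)
    then show ?thesis using ua is_unit_poly_iff by blast
  next
    case 3
    then have "b = [:lead_coeff b:]" by (metis degree_0_id)
    then show ?thesis using ub is_unit_poly_iff by blast
  next
    case 2
    define u where "u = coeff a 0"
    define v where "v = coeff a 1"
    have "v = 1 \<or> v = -1" using lc 2 unfolding v_def by (auto simp: zmult_eq_1_iff)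
    then have vv: "v * v = 1" by auto
    have aeq: "a = [:u, v:]"
      by (rule poly_eqI) (auto simp: u_def v_def coeff_pCons 2 coeff_eq_0 split: nat.split)
    have "poly a (- u * v) = 0" using vv by (simp add: aeq algebra_simps)
    then have "poly (fp c) (- u * v) = 0" using ab by simp
    moreover have "poly (fp c) (- u * v) > 0" unfolding poly_fp by (simp add: add_pos_nonneg)
    ultimately show ?thesis by simp
  qed
qed

lemma card_roots_le2:
  fixes p :: int
  assumes "prime p"
  shows "card {a \<in> {0..<p}. p dvd poly (fp c) a} \<le> 2"
proof (cases "{a \<in> {0..<p}. p dvd poly (fp c) a} = {}")
  case True then show ?thesis unfolding True by simp
next
  case False
  then obtain a0 where a0: "a0 \<in> {0..<p}" "p dvd poly (fp c) a0" by auto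
  have "{a \<in> {0..<p}. p dvd poly (fp c) a} \<subseteq> {a0, (2 * int c - a0) mod p}"
  proof
    fix a assume a: "a \<in> {a \<in> {0..<p}. p dvd poly (fp c) a}"
    then have "p dvd poly (fp c) a - poly (fp c) a0" using a0 by auto
    moreover have "poly (fp c) a - poly (fp c) a0 = (a - a0) * (a - (2 * int c - a0))"
      by (simp add: poly_fp algebra_simps power2_eq_square)
    ultimately have "p dvd (a - a0) * (a - (2 * int c - a0))" by simp
    then have "p dvd (a - a0) \<or> p dvd (a - (2 * int c - a0))"
      using assms by (simp only: prime_dvd_mult_iff)
    moreover have "a mod p = a" "a0 mod p = a0" using a a0 by auto
    ultimately show "a \<in> {a0, (2 * int c - a0) mod p}"
      by (metis insertCI mod_eq_dvd_iff)
  qed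
  then have "card {a \<in> {0..<p}. p dvd poly (fp c) a} \<le> card {a0, (2 * int c - a0) mod p}"
    by (intro card_mono) auto
  also have "\<dots> \<le> 2" by (simp add: card_insert_if)
  finally show ?thesis .
qed

lemma buny:
  assumes fin: "finite T" and cardT: "2 * card T < B"
    and small: "\<forall>c\<in>T. \<forall>p::int. prime p \<longrightarrow> p \<le> int B \<longrightarrow> \<not> p dvd (int c ^ 2 + 1)"
  shows "bunyakovsky (fp ` T)"
  unfolding bunyakovsky_def
proof
  assume "\<exists>p::int. prime p \<and> (\<forall>a. p dvd (\<Prod>f\<in>fp ` T. poly f a))"
  then obtain p :: int where p: "prime p" and all: "\<And>a. p dvd (\<Prod>f\<in>fp ` T. poly f a)" by blast
  have bad: "\<exists>c\<in>T. p dvd poly (fp c) a" for a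
    using all[of a] p fin by (auto simp: prime_dvd_prod_iff)
  show False
  proof (cases "p \<le> int B")
    case True
    from bad[of 0] obtain c where "c \<in> T" "p dvd poly (fp c) 0" by auto
    then show False using small True p by (simp add: poly_fp)
  next
    case False
    have "{0..<p} \<subseteq> (\<Union>c\<in>T. {a \<in> {0..<p}. p dvd poly (fp c) a})" using bad by auto
    then have "card {0..<p} \<le> card (\<Union>c\<in>T. {a \<in> {0..<p}. p dvd poly (fp c) a})"
      by (intro card_mono finite_UN_I fin ballI finite_subset[OF _ finite_atLeastLessThan_int[of 0 p]]) auto
    also have "\<dots> \<le> (\<Sum>c\<in>T. card {a \<in> {0..<p}. p dvd poly (fp c) a})"
      by (rule card_UN_le[OF fin])
    also have "\<dots> \<le> (\<Sum>c\<in>T. 2)" by (intro sum_mono card_roots_le2 p)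
    also have "\<dots> = 2 * card T" by simp
    finally have "nat p \<le> 2 * card T" by simp
    then show False using False cardT by linarith
  qed
qed



lemma lnpow_tendsto: "((\<lambda>x::real. ln x ^ K / x) \<longlongrightarrow> 0) at_top"
proof -
  have "((\<lambda>x::real. (\<lambda>t::real. t ^ K / exp t) (ln x)) \<longlongrightarrow> 0) at_top"
    using filterlim_compose[OF tendsto_power_div_exp_0[of K] ln_at_top] by (simp only:)
  moreover have "eventually (\<lambda>x::real. (\<lambda>t::real. t ^ K / exp t) (ln x) = ln x ^ K / x) at_top"
    using eventually_gt_at_top[of "0::real"] by eventually_elim simp
  ultimately show ?thesis by (rule Lim_transform_eventually)
qed

lemma h_nonzero: "C > 0 \<Longrightarrow> eventually (\<lambda>x::real. C * x / ln x ^ K \<noteq> 0) at_top"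
  using eventually_gt_at_top[of "1::real"] by eventually_elim auto

lemma const_smallo:
  assumes "C > 0" shows "(\<lambda>x::real. c) \<in> o(\<lambda>x. C * x / ln x ^ K)"
proof (rule smalloI_tendsto)
  have "((\<lambda>x::real. (c / C) * (ln x ^ K / x)) \<longlongrightarrow> 0) at_top"
    using tendsto_mult[OF tendsto_const lnpow_tendsto, of "c / C" K] by simp
  moreover have "eventually (\<lambda>x. (c / C) * (ln x ^ K / x) = c / (C * x / ln x ^ K)) at_top"
    using eventually_gt_at_top[of "1::real"] by eventually_elim (auto simp: field_simps)
  ultimately show "((\<lambda>x. c / (C * x / ln x ^ K)) \<longlongrightarrow> 0) at_top"
    by (rule Lim_transform_eventually)
  show "eventually (\<lambda>x::real. C * x / ln x ^ K \<noteq> 0) at_top" using h_nonzero[OF assms] .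
qed

lemma next_smallo:
  assumes "C > 0" shows "(\<lambda>x::real. C' * x / ln x ^ Suc K) \<in> o(\<lambda>x. C * x / ln x ^ K)"
proof (rule smalloI_tendsto)
  have "((\<lambda>x::real. (C' / C) * inverse (ln x)) \<longlongrightarrow> 0) at_top"
    using tendsto_mult[OF tendsto_const tendsto_inverse_0_at_top[OF ln_at_top], of "C' / C"] by simp
  moreover have "eventually (\<lambda>x. (C' / C) * inverse (ln x) = (C' * x / ln x ^ Suc K) / (C * x / ln x ^ K)) at_top"
    using eventually_gt_at_top[of "1::real"] by eventually_elim (auto simp: field_simps)
  ultimately show "((\<lambda>x. (C' * x / ln x ^ Suc K) / (C * x / ln x ^ K)) \<longlongrightarrow> 0) at_top"
    by (rule Lim_transform_eventually)
  show "eventually (\<lambda>x::real. C * x / ln x ^ K \<noteq> 0) at_top" using h_nonzero[OF assms] .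
qed

lemma asymp_contra:
  fixes f h :: "real \<Rightarrow> real"
  assumes "f \<sim>[at_top] h" "f \<in> o(h)" "eventually (\<lambda>x. h x \<noteq> 0) at_top"
  shows False
proof -
  have "h \<in> O(f)" using asymp_equiv_imp_bigo[OF asymp_equiv_symI[OF assms(1)]] .
  then have "h \<in> o(h)" using assms(2) by (rule landau_o.big_small_trans)
  then have "eventually (\<lambda>x. h x = 0) at_top" by (simp add: landau_o.small_refl_iff)
  with assms(3) have "eventually (\<lambda>x. h x \<noteq> 0 \<and> h x = 0) at_top" by (rule eventually_conj)
  then show False by simp
qed

lemma finite_le_real: "finite {m::nat. P m \<and> real m \<le> x}"
proof (rule finite_subset[of _ "{..nat \<lfloor>x\<rfloor>}"])
  show "{m::nat. P m \<and> real m \<le> x} \<subseteq> {..nat \<lfloor>x\<rfloor>}"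
  proof
    fix m assume "m \<in> {m::nat. P m \<and> real m \<le> x}"
    then have "real m \<le> x" by simp
    then have "int m \<le> \<lfloor>x\<rfloor>" by (simp add: le_floor_iff)
    then show "m \<in> {..nat \<lfloor>x\<rfloor>}" by simp
  qed
qed simp

lemma pcf_finite: "finite {m::nat. 0 < m \<and> real m \<le> x \<and> P m}"
  using finite_le_real[of "\<lambda>m. 0 < m \<and> P m" x] by (simp add: conj_commute conj_left_commute)

lemma bh_fp:
  assumes "bateman_horn" "finite U" "U \<noteq> {}" "bunyakovsky (fp ` U)"
  shows "\<exists>C>0. (\<lambda>x. real (prime_count_family (fp ` U) x)) \<sim>[at_top] (\<lambda>x. C * x / ln x ^ card U)"
proof -
  have "card (fp ` U) = card U" using fp_inj by (simp add: card_image inj_on_subset)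
  moreover have "\<forall>f\<in>fp ` U. irreducible f \<and> lead_coeff f > 0" using irred_fp lead_fp by auto
  ultimately show ?thesis using assms unfolding bateman_horn_def by auto
qed

lemma bh_infinite:
  assumes "bateman_horn" "finite U" "U \<noteq> {}" "bunyakovsky (fp ` U)"
  shows "infinite {m::nat. \<forall>c\<in>U. prime (poly (fp c) (int m))}"
proof
  assume fin: "finite {m::nat. \<forall>c\<in>U. prime (poly (fp c) (int m))}"
  define S where "S = {m::nat. \<forall>c\<in>U. prime (poly (fp c) (int m))}"
  obtain C where C: "C > 0" and eq: "(\<lambda>x. real (prime_count_family (fp ` U) x)) \<sim>[at_top] (\<lambda>x. C * x / ln x ^ card U)"
    using bh_fp[OF assms] by blast
  have le: "prime_count_family (fp ` U) x \<le> card S" for x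
    unfolding prime_count_family_def S_def
    by (rule card_mono[OF fin[folded S_def, unfolded S_def]]) auto
  have "(\<lambda>x. real (prime_count_family (fp ` U) x)) \<in> O(\<lambda>x. real (card S))"
    by (intro bigoI[where c=1] always_eventually allI) (use le in auto)
  moreover have "(\<lambda>x::real. real (card S)) \<in> o(\<lambda>x. C * x / ln x ^ card U)"
    by (rule const_smallo[OF C])
  ultimately have "(\<lambda>x. real (prime_count_family (fp ` U) x)) \<in> o(\<lambda>x. C * x / ln x ^ card U)"
    by (rule landau_o.big_small_trans)
  then show False using asymp_contra[OF eq _ h_nonzero[OF C]] by blast
qed



lemma int_le_sq: "(t::int) \<le> t^2"
proof (cases "t \<le> 0")
  case True then show ?thesis by (smt (verit) zero_le_power2)
next
  case False then have "t * 1 \<le> t * t" by (intro mult_left_mono) auto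
  then show ?thesis by (simp add: power2_eq_square)
qed

lemma nonbuny_bound:
  assumes fin: "finite U" and nb: "\<not> bunyakovsky (fp ` U)"
  shows "\<exists>M. \<forall>m::nat. (\<forall>c\<in>U. prime (poly (fp c) (int m))) \<longrightarrow> m \<le> M"
proof -
  obtain p :: int where p: "prime p" and all: "\<And>a. p dvd (\<Prod>f\<in>fp ` U. poly f a)"
    using nb unfolding bunyakovsky_def by blast
  have "m \<le> Max U + nat p" if m: "\<forall>c\<in>U. prime (poly (fp c) (int m))" for m :: nat
  proof -
    from all[of "int m"] p fin obtain c where c: "c \<in> U" "p dvd poly (fp c) (int m)"
      by (auto simp: prime_dvd_prod_iff)
    then have "p = poly (fp c) (int m)" using m p by (intro primes_dvd_imp_eq) auto
    then have peq: "p = (int m - int c)^2 + 1" by (simp add: poly_fp)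
    have "int m - int c \<le> (int m - int c)^2" by (rule int_le_sq)
    then have "int m \<le> int c + p" using peq by linarith
    moreover have "c \<le> Max U" using c fin by simp
    ultimately show ?thesis by linarith
  qed
  then show ?thesis by blast
qed

lemma Q_smallo:
  assumes bh: "bateman_horn" and fin: "finite T" and ne: "T \<noteq> {}" and eT: "e \<notin> T" and C: "C > 0"
  shows "(\<lambda>x. real (prime_count_family (fp ` insert e T) x)) \<in> o(\<lambda>x. C * x / ln x ^ card T)"
proof (cases "bunyakovsky (fp ` insert e T)")
  case True
  obtain C' where eq: "(\<lambda>x. real (prime_count_family (fp ` insert e T) x)) \<sim>[at_top] (\<lambda>x. C' * x / ln x ^ card (insert e T))"
    using bh_fp[OF bh _ _ True] fin by auto
  have "card (insert e T) = Suc (card T)" using eT fin by simp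
  then have "(\<lambda>x. real (prime_count_family (fp ` insert e T) x)) \<in> O(\<lambda>x. C' * x / ln x ^ Suc (card T))"
    using asymp_equiv_imp_bigo[OF eq] by simp
  then show ?thesis using next_smallo[OF C] by (rule landau_o.big_small_trans)
next
  case False
  obtain M where M: "\<And>m::nat. (\<forall>c\<in>insert e T. prime (poly (fp c) (int m))) \<Longrightarrow> m \<le> M"
    using nonbuny_bound[OF _ False] fin by blast
  have le: "prime_count_family (fp ` insert e T) x \<le> card {..M}" for x
    unfolding prime_count_family_def by (rule card_mono) (auto intro!: M)
  obtain K0 where le': "\<And>x. prime_count_family (fp ` insert e T) x \<le> K0" using le by blast
  have "(\<lambda>x. real (prime_count_family (fp ` insert e T) x)) \<in> O(\<lambda>x. real K0)"
    by (intro bigoI[where c=1] always_eventually allI) (use le' in auto)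
  then show ?thesis using const_smallo[OF C] by (rule landau_o.big_small_trans)
qed

lemma good_infinite:
  assumes bh: "bateman_horn" and fin: "finite T" and ne: "T \<noteq> {}" and bu: "bunyakovsky (fp ` T)"
    and finE: "finite E" and disj: "E \<inter> T = {}"
  shows "infinite {m::nat. (\<forall>c\<in>T. prime (poly (fp c) (int m))) \<and> (\<forall>e\<in>E. \<not> prime (poly (fp e) (int m)))}"
    (is "infinite ?G")
proof
  assume finG: "finite ?G"
  obtain C where C: "C > 0" and eq: "(\<lambda>x. real (prime_count_family (fp ` T) x)) \<sim>[at_top] (\<lambda>x. C * x / ln x ^ card T)"
    using bh_fp[OF bh fin ne bu] by blast
  define Q where "Q e x = {m::nat. 0 < m \<and> real m \<le> x \<and> (\<forall>f\<in>fp ` insert e T. prime (poly f (int m)))}" for e x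
  have finQ: "finite (Q e x)" for e x unfolding Q_def by (rule pcf_finite)
  have le: "prime_count_family (fp ` T) x \<le> card ?G + (\<Sum>e\<in>E. prime_count_family (fp ` insert e T) x)" for x
  proof -
    have "{m::nat. 0 < m \<and> real m \<le> x \<and> (\<forall>f\<in>fp ` T. prime (poly f (int m)))} \<subseteq> ?G \<union> (\<Union>e\<in>E. Q e x)"
    proof
      fix m assume m: "m \<in> {m::nat. 0 < m \<and> real m \<le> x \<and> (\<forall>f\<in>fp ` T. prime (poly f (int m)))}"
      show "m \<in> ?G \<union> (\<Union>e\<in>E. Q e x)"
      proof (cases "\<forall>e\<in>E. \<not> prime (poly (fp e) (int m))")
        case True then show ?thesis using m by simp
      next
        case False
        then obtain e where e: "e \<in> E" "prime (poly (fp e) (int m))" by blast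
        then have "m \<in> Q e x" using m unfolding Q_def by simp
        then show ?thesis using e(1) by blast
      qed
    qed
    moreover have "finite (?G \<union> (\<Union>e\<in>E. Q e x))"
      using finG finE finQ by blast
    ultimately have "prime_count_family (fp ` T) x \<le> card (?G \<union> (\<Union>e\<in>E. Q e x))"
      unfolding prime_count_family_def by (rule card_mono[rotated])
    also have "\<dots> \<le> card ?G + card (\<Union>e\<in>E. Q e x)" by (rule card_Un_le)
    also have "card (\<Union>e\<in>E. Q e x) \<le> (\<Sum>e\<in>E. card (Q e x))" by (rule card_UN_le[OF finE])
    also have "(\<Sum>e\<in>E. card (Q e x)) = (\<Sum>e\<in>E. prime_count_family (fp ` insert e T) x)"
      unfolding Q_def prime_count_family_def by (rule refl)
    finally show ?thesis by simp
  qed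
  define R where "R x = real (card ?G) + (\<Sum>e\<in>E. real (prime_count_family (fp ` insert e T) x))" for x
  have "(\<lambda>x. real (prime_count_family (fp ` T) x)) \<in> O(R)"
  proof (intro bigoI[where c=1] always_eventually allI)
    fix x
    have "real (prime_count_family (fp ` T) x) \<le> real (card ?G + (\<Sum>e\<in>E. prime_count_family (fp ` insert e T) x))"
      using le[of x] by (simp only: of_nat_le_iff)
    also have "\<dots> = R x" unfolding R_def by simp
    finally have "real (prime_count_family (fp ` T) x) \<le> R x" .
    moreover have "0 \<le> R x" unfolding R_def by (intro add_nonneg_nonneg sum_nonneg) auto
    ultimately show "norm (real (prime_count_family (fp ` T) x)) \<le> 1 * norm (R x)" by simp
  qed
  moreover have "R \<in> o(\<lambda>x. C * x / ln x ^ card T)"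
    unfolding R_def
  proof (rule sum_in_smallo(1))
    show "(\<lambda>x::real. real (card ?G)) \<in> o(\<lambda>x. C * x / ln x ^ card T)" by (rule const_smallo[OF C])
    show "(\<lambda>x. \<Sum>e\<in>E. real (prime_count_family (fp ` insert e T) x)) \<in> o(\<lambda>x. C * x / ln x ^ card T)"
      by (rule big_sum_in_smallo, rule Q_smallo[OF bh fin ne _ C]) (use disj in auto)
  qed
  ultimately have "(\<lambda>x. real (prime_count_family (fp ` T) x)) \<in> o(\<lambda>x. C * x / ln x ^ card T)"
    by (rule landau_o.big_small_trans)
  then show False using asymp_contra[OF eq _ h_nonzero[OF C]] by blast
qed

lemma enum_prev:
  fixes S :: "nat set"
  assumes inf: "infinite S" and x: "enumerate S r = x" and y: "y \<in> S" "y < x"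
    and gap: "\<And>z. z \<in> S \<Longrightarrow> y < z \<Longrightarrow> z < x \<Longrightarrow> False"
  shows "0 < r \<and> enumerate S (r - 1) = y"
proof -
  obtain s where s: "enumerate S s = y" using enumerate_Ex[OF inf y(1)] by blast
  have "s < r" using s x y(2) inf by (metis enumerate_mono not_less_iff_gr_or_eq)
  then have r0: "0 < r" by simp
  have "s \<le> r - 1" using \<open>s < r\<close> by simp
  then have "enumerate S s \<le> enumerate S (r - 1)" using inf by simp
  moreover have "enumerate S (r - 1) < x" using x r0 inf by (metis diff_less enumerate_mono zero_less_one)
  moreover have "enumerate S (r - 1) \<in> S" using enumerate_in_set[OF inf] .
  ultimately have "enumerate S (r - 1) = y" using gap s by (metis le_neq_implies_less)
  with r0 show ?thesis by simp
qed



lemma setA_shift: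
  assumes "c \<le> m"
  shows "m - c \<in> setA \<longleftrightarrow> c < m \<and> prime (poly (fp c) (int m))"
proof -
  have "poly (fp c) (int m) = int ((m - c)^2 + 1)" using assms by (simp add: poly_fp of_nat_diff)
  then have "prime (poly (fp c) (int m)) \<longleftrightarrow> prime ((m - c)^2 + 1)"
    by (simp only: prime_nat_int_transfer)
  then show ?thesis using assms unfolding setA_def by auto
qed

lemma not_prime_prod:
  assumes "(a::nat) \<ge> 2" "b \<ge> 2" shows "\<not> prime (a * b)"
proof
  assume "prime (a * b)"
  then have "a = 1 \<or> b = 1" by (rule prime_product)
  with assms show False by auto
qed

theorem proposition2:
  assumes "bateman_horn"
  shows "\<forall>k::nat. k > 0 \<longrightarrow> infinite {n::nat. n \<ge> 2 \<and> (\<exists>i. jfun n = Some i \<and> i \<ge> k)}"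
proof (intro allI impI)
  fix k :: nat assume k: "k > 0"
  define B where "B = 2 * k + 3"
  define N :: nat where "N = fact B"
  define R where "R = N^2 + 1"
  define d where "d i = N * (1 + R * i)" for i
  have N1: "N \<ge> 1" unfolding N_def by (simp add: fact_ge_1)
  have NB: "B \<le> N" unfolding N_def by (rule fact_ge_self)
  have "1 \<le> N^2" using N1 by simp
  then have R2: "R \<ge> 2" unfolding R_def by simp
  have dmono: "i \<le> j \<Longrightarrow> d i \<le> d j" for i j unfolding d_def by simp
  have dsmono: "i < j \<Longrightarrow> d i < d j" for i j unfolding d_def using N1 R2 by simp
  have dpos: "d i > 0" for i unfolding d_def using N1 by simp
  have dgeN: "N \<le> d i" for i unfolding d_def by simp
  have d_notA: "d i \<notin> setA" if "i \<ge> 1" for i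
  proof -
    have eq: "(d i)^2 + 1 = R * (1 + N^2 * i * (2 + R * i))"
      unfolding d_def R_def by (simp add: algebra_simps power2_eq_square)
    have "1 + N^2 * i * (2 + R * i) \<ge> 2" using that N1 by (simp add: Suc_le_eq)
    then have "\<not> prime ((d i)^2 + 1)" unfolding eq using R2 by (intro not_prime_prod)
    then show ?thesis unfolding setA_def by simp
  qed
  have bu0: "bunyakovsky (fp ` {0})" by (rule buny[where B=3]) (auto simp: not_prime_unit)
  have "infinite {m::nat. \<forall>c\<in>{0}. prime (poly (fp c) (int m))}"
    by (rule bh_infinite[OF assms _ _ bu0]) auto
  then obtain D where D: "D > d (k - 1)" "prime (poly (fp 0) (int D))"
    unfolding infinite_nat_iff_unbounded by auto
  have DA: "D \<in> setA" using setA_shift[of 0 D] D dpos[of "k-1"] by auto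
  have DN: "D > N" using D(1) dgeN[of "k - 1"] by simp
  define cc where "cc i = (if i = 0 then 0 else if i < k then d i else D)" for i
  have ccs: "cc i < cc j" if "i < j" "j \<le> k" for i j
  proof (cases "i = 0")
    case True then show ?thesis using that dpos DN unfolding cc_def by auto
  next
    case False
    show ?thesis
    proof (cases "j < k")
      case True then show ?thesis using False that dsmono unfolding cc_def by auto
    next
      case False
      then have "j = k" using that by simp
      moreover have "d i \<le> d (k - 1)" using that \<open>j = k\<close> by (intro dmono) simp
      ultimately show ?thesis using \<open>i \<noteq> 0\<close> that D(1) unfolding cc_def by auto
    qed
  qed
  have ccle: "cc i \<le> cc j" if "i \<le> j" "j \<le> k" for i j
    using ccs[of i j] that by (cases "i = j") auto
  have ccD: "cc i \<le> D" if "i \<le> k" for i using ccle[of i k] that k unfolding cc_def by (auto split: if_splits)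
  have cck: "cc k = D" unfolding cc_def using k by simp
  have cc0: "cc 0 = 0" unfolding cc_def by simp
  define T where "T = cc ` {0..k}"
  have finT: "finite T" and neT: "T \<noteq> {}" unfolding T_def by auto
  have cardT: "card T \<le> k + 1" unfolding T_def using card_image_le[of "{0..k}" cc] by simp
  have small: "\<forall>c\<in>T. \<forall>p::int. prime p \<longrightarrow> p \<le> int B \<longrightarrow> \<not> p dvd (int c ^ 2 + 1)"
  proof (intro ballI allI impI)
    fix c and p :: int assume c: "c \<in> T" and p: "prime p" "p \<le> int B"
    show "\<not> p dvd (int c ^ 2 + 1)"
    proof
      assume dv: "p dvd (int c ^ 2 + 1)"
      from c obtain i where i: "i \<le> k" "c = cc i" unfolding T_def by auto
      consider "i = 0" | "0 < i" "i < k" | "i = k" using i by linarith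
      then show False
      proof cases
        case 1 then show False using dv p i unfolding cc_def by (simp add: not_prime_unit)
      next
        case 2
        have pp: "p > 0" using p prime_gt_0_int by blast
        have "nat p dvd N" unfolding N_def using p pp
          by (intro dvd_fact) (auto simp: prime_ge_1_int)
        then have "p dvd int N" using pp by (metis int_dvd_int_iff int_nat_eq less_le)
        moreover have "int N dvd int c" using 2 i unfolding cc_def d_def by simp
        ultimately have "p dvd int c ^ 2" unfolding power2_eq_square by (meson dvd_trans dvd_mult2)
        then have "p dvd 1" using dv by (simp add: dvd_add_right_iff)
        then show False using p by (simp add: not_prime_unit)
      next
        case 3
        have "prime (int c ^ 2 + 1)" using D(2) i 3 cck by (simp add: poly_fp)
        then have "p = int c ^ 2 + 1" using p dv by (intro primes_dvd_imp_eq) auto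
        moreover have "int c \<ge> int N" using i 3 cck DN by simp
        moreover have "int N \<ge> int B" using NB by simp
        moreover have "int c \<le> int c ^ 2" by (rule int_le_sq)
        ultimately show False using p by linarith
      qed
    qed
  qed
  have buT: "bunyakovsky (fp ` T)" by (rule buny[OF finT _ small]) (use cardT in \<open>simp add: B_def\<close>)
  define E where "E = {1..<D} - T"
  have finE: "finite E" and disj: "E \<inter> T = {}" unfolding E_def by auto
  define G where "G = {m::nat. (\<forall>c\<in>T. prime (poly (fp c) (int m))) \<and> (\<forall>e\<in>E. \<not> prime (poly (fp e) (int m)))}"
  have infG: "infinite G" unfolding G_def by (rule good_infinite[OF assms finT neT buT finE disj])
  define G' where "G' = G - {..D+1}"
  have infG': "infinite G'" unfolding G'_def using infG by simp
  have T0: "0 \<in> T" unfolding T_def using cc0 by force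
  have G'A: "G' \<subseteq> setA"
  proof
    fix m assume "m \<in> G'"
    then have "prime (poly (fp 0) (int m))" "m > D + 1" using T0 unfolding G'_def G_def by auto
    then show "m \<in> setA" using setA_shift[of 0 m] by simp
  qed
  have infA: "infinite setA" using infG' G'A finite_subset by blast
  have key: "\<exists>r. enumerate setA r = m \<and> jfun (Suc r) = Some k \<and> k \<le> r" if m: "m \<in> G'" for m
  proof -
    have mD: "m > D + 1" and mT: "\<forall>c\<in>T. prime (poly (fp c) (int m))"
      and mE: "\<forall>e\<in>E. \<not> prime (poly (fp e) (int m))" using m unfolding G'_def G_def by auto
    have inA: "m - c \<in> setA" if "c \<in> T" for c
    proof -
      have "c \<le> D" using that ccD unfolding T_def by auto
      then show ?thesis using setA_shift[of c m] mT that mD by auto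
    qed
    have notA: "m - e \<notin> setA" if "e \<in> E" for e
    proof -
      have "e < D" using that unfolding E_def by auto
      then show ?thesis using setA_shift[of e m] mE that mD by auto
    qed
    obtain r where r: "enumerate setA r = m" using enumerate_Ex[OF infA] G'A m by blast
    have step: "i \<le> r \<and> enumerate setA (r - i) = m - cc i" if "i \<le> k" for i
      using that
    proof (induction i)
      case 0 then show ?case using r cc0 by simp
    next
      case (Suc i)
      then have IH: "i \<le> r" "enumerate setA (r - i) = m - cc i" by auto
      have lt: "cc i < cc (Suc i)" using ccs[of i "Suc i"] Suc.prems by simp
      have le: "cc (Suc i) \<le> D" using ccD Suc.prems by simp
      have yA: "m - cc (Suc i) \<in> setA" using inA[of "cc (Suc i)"] Suc.prems unfolding T_def by auto
      have "0 < r - i \<and> enumerate setA (r - i - 1) = m - cc (Suc i)"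
      proof (rule enum_prev[OF infA IH(2) yA])
        show "m - cc (Suc i) < m - cc i" using lt le mD by simp
        fix z assume z: "z \<in> setA" "m - cc (Suc i) < z" "z < m - cc i"
        define e where "e = m - z"
        have ze: "z = m - e" and e1: "cc i < e" and e2: "e < cc (Suc i)"
          using z lt le mD unfolding e_def by auto
        have "e \<notin> T"
        proof
          assume "e \<in> T"
          then obtain j where j: "j \<le> k" "e = cc j" unfolding T_def by auto
          have "i < j" using e1 j ccle[of j i] Suc.prems by (metis not_le le_trans Suc_leD)
          moreover have "j < Suc i" using e2 j ccle[of "Suc i" j] by (metis not_le)
          ultimately show False by simp
        qed
        then have "e \<in> E" using e1 e2 le unfolding E_def by auto
        then show False using notA z(1) ze by blast
      qed
      then show ?case using IH by (simp add: diff_diff_add)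
    qed
    have kr: "k \<le> r" and ek: "enumerate setA (r - k) = m - D" using step[of k] cck by auto
    have aseqn: "aseq (Suc r) = m" unfolding aseq_def using r by simp
    have diff: "aseq (Suc r) - aseq (Suc r - i) = cc i" if "1 \<le> i" "i \<le> k" for i
    proof -
      have "aseq (Suc r - i) = enumerate setA (r - i)" unfolding aseq_def using that by simp
      also have "\<dots> = m - cc i" using step[of i] that by simp
      finally show ?thesis using aseqn ccD[of i] that mD by simp
    qed
    have memk: "cc i \<in> setA \<longleftrightarrow> i = k" if "1 \<le> i" "i \<le> k" for i
      using that d_notA DA unfolding cc_def by auto
    have P: "(1 \<le> i \<and> i \<le> Suc r - 1 \<and> aseq (Suc r) - aseq (Suc r - i) \<in> setA) \<longleftrightarrow> i = k" if "i \<le> k" for i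
      using that diff memk kr k by (cases "1 \<le> i") auto
    have ex: "\<exists>i. 1 \<le> i \<and> i \<le> Suc r - 1 \<and> aseq (Suc r) - aseq (Suc r - i) \<in> setA"
      using P[of k] by auto
    have "(LEAST i. 1 \<le> i \<and> i \<le> Suc r - 1 \<and> aseq (Suc r) - aseq (Suc r - i) \<in> setA) = k"
    proof (rule Least_equality)
      show "1 \<le> k \<and> k \<le> Suc r - 1 \<and> aseq (Suc r) - aseq (Suc r - k) \<in> setA" using P[of k] by simp
      fix y assume y: "1 \<le> y \<and> y \<le> Suc r - 1 \<and> aseq (Suc r) - aseq (Suc r - y) \<in> setA"
      show "k \<le> y"
      proof (rule ccontr)
        assume "\<not> k \<le> y"
        then show False using P[of y] y by simp
      qed
    qed
    then have "jfun (Suc r) = Some k" unfolding jfun_def using ex by simp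
    then show ?thesis using r kr by blast
  qed
  define \<phi> where "\<phi> m = Suc (SOME r. enumerate setA r = m \<and> jfun (Suc r) = Some k \<and> k \<le> r)" for m
  have \<phi>: "enumerate setA (\<phi> m - 1) = m \<and> jfun (\<phi> m) = Some k \<and> k \<le> \<phi> m - 1" if "m \<in> G'" for m
    using someI_ex[OF key[OF that]] unfolding \<phi>_def by simp
  have inj: "inj_on \<phi> G'"
  proof (rule inj_onI)
    fix x y assume "x \<in> G'" "y \<in> G'" "\<phi> x = \<phi> y"
    then show "x = y" using \<phi> by metis
  qed
  have sub: "\<phi> ` G' \<subseteq> {n::nat. n \<ge> 2 \<and> (\<exists>i. jfun n = Some i \<and> i \<ge> k)}"
  proof
    fix n assume "n \<in> \<phi> ` G'"
    then obtain m where m: "m \<in> G'" "n = \<phi> m" by blast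
    have "n \<ge> 2" using \<phi>[OF m(1)] m(2) k unfolding \<phi>_def by simp
    then show "n \<in> {n::nat. n \<ge> 2 \<and> (\<exists>i. jfun n = Some i \<and> i \<ge> k)}" using \<phi>[OF m(1)] m(2) by auto
  qed
  have "infinite (\<phi> ` G')" using infG' inj finite_imageD by blast
  then show "infinite {n::nat. n \<ge> 2 \<and> (\<exists>i. jfun n = Some i \<and> i \<ge> k)}"
    using sub finite_subset by blast
qed


end
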